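(* Let $G\leq\operatorname{Homeo}(\mathfrak{C})$ be vigorous and let $A\in K_{\mathfrak{C}}$. Then a free group of rank $2$ embeds in $\operatorname{pstab}_G(A)$.
   Context: $\mathfrak{C}$ denotes a Cantor space (a space homeomorphic to $\{0,1\}^\omega$). Groups of homeomorphisms act on the right. $K_{\mathfrak{C}}$ denotes the set of non-empty proper clopen subsets of $\mathfrak{C}$. For $\gamma\in\operatorname{Homeo}(\mathfrak{C})$, $\operatorname{supp}(\gamma)=\{p\in\mathfrak{C}: p\gamma\neq p\}$. For $G\le\operatorname{Homeo}(\mathfrak{C})$ and $A\subseteq\mathfrak{C}$, $\operatorname{pstab}_G(A)=\{g\in G: pg=p \text{ for all } p\in A\}$. A subset $S\subseteq \operatorname{Homeo}(\mathfrak{C})$ is vigorous if for all clopen $A,B,C\subseteq\mathfrak{C}$ with $B,C$ non-empty proper subsets of $A$ there is $\gamma\in S$ with $\operatorname{supp}(\gamma)\subseteq A$ and $B\gamma\subseteq C$. *)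

theory Defs
  imports "HOL-Analysis.Analysis"
begin

definition cantor :: "(nat \<Rightarrow> bool) topology" where
  "cantor = product_topology (\<lambda>_. discrete_topology UNIV) UNIV"

type_synonym cpt = "nat \<Rightarrow> bool"
type_synonym cpt_map = "cpt \<Rightarrow> cpt"

definition is_homeo :: "(cpt \<Rightarrow> cpt) \<Rightarrow> bool" where
  "is_homeo g \<longleftrightarrow> homeomorphic_map cantor cantor g"

text \<open>A subgroup of Homeo(C). Groups act on the right: \<open>p(gh) = (p g) h\<close>,
  i.e. the product \<open>gh\<close> is the function \<open>h \<circ> g\<close>.\<close>
definition homeo_group :: "(cpt \<Rightarrow> cpt) set \<Rightarrow> bool" where
  "homeo_group G \<longleftrightarrow> (\<forall>g\<in>G. is_homeo g) \<and> id \<in> G \<and>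
     (\<forall>g\<in>G. \<forall>h\<in>G. h \<circ> g \<in> G) \<and> (\<forall>g\<in>G. inv g \<in> G)"

definition clopen_C :: "cpt set \<Rightarrow> bool" where
  "clopen_C A \<longleftrightarrow> openin cantor A \<and> closedin cantor A"

definition K_C :: "cpt set set" where
  "K_C = {A. clopen_C A \<and> A \<noteq> {} \<and> A \<noteq> topspace cantor}"

definition supp :: "(cpt \<Rightarrow> cpt) \<Rightarrow> cpt set" where
  "supp g = {p. g p \<noteq> p}"

definition pstab :: "(cpt \<Rightarrow> cpt) set \<Rightarrow> cpt set \<Rightarrow> (cpt \<Rightarrow> cpt) set" where
  "pstab G A = {g \<in> G. \<forall>p\<in>A. g p = p}"

definition vigorous :: "(cpt \<Rightarrow> cpt) set \<Rightarrow> bool" where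
  "vigorous S \<longleftrightarrow> (\<forall>A B C. clopen_C A \<and> clopen_C B \<and> clopen_C C \<and>
      B \<noteq> {} \<and> B \<subset> A \<and> C \<noteq> {} \<and> C \<subset> A \<longrightarrow>
      (\<exists>\<gamma>\<in>S. supp \<gamma> \<subseteq> A \<and> \<gamma> ` B \<subseteq> C))"

text \<open>Words in two letters: a letter is (generator, inverted?), generator True = a,
  False = b. A word is reduced if no letter is adjacent to its inverse.\<close>
fun reduced_word :: "(bool \<times> bool) list \<Rightarrow> bool" where
  "reduced_word (x # y # w) \<longleftrightarrow> \<not> (fst x = fst y \<and> snd x \<noteq> snd y) \<and> reduced_word (y # w)"
| "reduced_word _ \<longleftrightarrow> True"

definition letter_val :: "cpt_map \<Rightarrow> cpt_map \<Rightarrow> bool \<times> bool \<Rightarrow> cpt_map" where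
  "letter_val a b x = (let g = (if fst x then a else b) in if snd x then inv g else g)"

text \<open>Evaluation of a word with right action: the first letter acts first.\<close>
fun word_val :: "cpt_map \<Rightarrow> cpt_map \<Rightarrow> (bool \<times> bool) list \<Rightarrow> cpt_map" where
  "word_val a b [] = id"
| "word_val a b (x # w) = word_val a b w \<circ> letter_val a b x"

definition free_pair :: "cpt_map \<Rightarrow> cpt_map \<Rightarrow> bool" where
  "free_pair a b \<longleftrightarrow> (\<forall>w. reduced_word w \<and> w \<noteq> [] \<longrightarrow> word_val a b w \<noteq> id)"

end

theory Submission
  imports Defs
begin

lemma topspace_cantor[simp]: "topspace cantor = UNIV"
  by (auto simp: cantor_def PiE_def extensional_def)

definition cyl :: "cpt \<Rightarrow> nat set \<Rightarrow> cpt set" where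
  "cyl c F = {q. \<forall>i\<in>F. q i = c i}"

lemma coord_clopen: "clopen_C {q. q i = v}"
proof -
  have cm: "continuous_map cantor (discrete_topology UNIV) (\<lambda>x. x i)"
    unfolding cantor_def by (rule continuous_map_product_projection) simp
  have "openin cantor {x \<in> topspace cantor. x i \<in> {v}}"
    by (rule openin_continuous_map_preimage[OF cm]) simp
  moreover have "closedin cantor {x \<in> topspace cantor. x i \<in> {v}}"
    by (rule closedin_continuous_map_preimage[OF cm]) simp
  ultimately show ?thesis by (simp add: clopen_C_def)
qed

lemma cyl_clopen: "finite F \<Longrightarrow> clopen_C (cyl c F)"
proof (induction F rule: finite_induct)
  case empty
  then show ?case
    by (simp add: cyl_def clopen_C_def) (metis closedin_topspace openin_topspace topspace_cantor)
next
  case (insert x F)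
  have "cyl c (insert x F) = {q. q x = c x} \<inter> cyl c F" by (auto simp: cyl_def)
  then show ?case using insert coord_clopen[of x "c x"]
    by (simp add: clopen_C_def openin_Int closedin_Int)
qed

lemma bij_homeo: "is_homeo g \<Longrightarrow> bij g"
  unfolding is_homeo_def bij_def
  using homeomorphic_imp_injective_map homeomorphic_imp_surjective_map by fastforce

lemma pingpong:
  assumes H1: "\<And>x q. q \<in> D \<Longrightarrow> q \<notin> Q (fst x, \<not> snd x) \<Longrightarrow> letter_val a b x q \<in> Q x"
    and H2: "\<And>x. Q x \<subseteq> D"
    and H3: "\<And>x y. x \<noteq> y \<Longrightarrow> Q x \<inter> Q y = {}"
  shows "reduced_word (x#w) \<Longrightarrow> q \<in> D \<Longrightarrow> q \<notin> Q (fst x, \<not> snd x)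
     \<Longrightarrow> word_val a b (x#w) q \<in> Q (last (x#w))"
proof (induction w arbitrary: x q)
  case Nil
  then show ?case using H1 by simp
next
  case (Cons y w)
  have r: "letter_val a b x q \<in> Q x" using H1 Cons.prems by blast
  have ne: "x \<noteq> (fst y, \<not> snd y)" using Cons.prems(1) by (cases x; cases y) auto
  have "letter_val a b x q \<notin> Q (fst y, \<not> snd y)" using r H3[OF ne] by blast
  moreover have "letter_val a b x q \<in> D" using r H2 by blast
  moreover have "reduced_word (y#w)" using Cons.prems(1) by simp
  ultimately have "word_val a b (y#w) (letter_val a b x q) \<in> Q (last (y#w))"
    using Cons.IH by blast
  then show ?case by simp
qed

theorem theorem2p2:
  assumes "homeo_group G" and "vigorous G" and "A \<in> K_C"
  shows "\<exists>a b. a \<in> pstab G A \<and> b \<in> pstab G A \<and> free_pair a b"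
proof -
  define D where "D = - A"
  have AK: "clopen_C A" "A \<noteq> {}" "A \<noteq> UNIV" using assms(3) by (auto simp: K_C_def)
  have Dcl: "clopen_C D" using AK(1) unfolding D_def clopen_C_def
    by (metis Compl_eq_Diff_UNIV closedin_def openin_closedin_eq topspace_cantor)
  obtain p0 where p0: "p0 \<in> D" using AK(3) D_def by auto
  have "openin cantor D" using Dcl clopen_C_def by blast
  then obtain U where U: "finite {i \<in> UNIV. U i \<noteq> UNIV}" "p0 \<in> Pi\<^sub>E UNIV U" "Pi\<^sub>E UNIV U \<subseteq> D"
    using p0 unfolding cantor_def openin_product_topology_alt by fastforce
  obtain n where n: "\<And>i. U i \<noteq> UNIV \<Longrightarrow> i < n"
    using finite_nat_bounded[OF U(1)] by auto
  have cylD: "cyl p0 {..<n} \<subseteq> D"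
  proof
    fix q assume q: "q \<in> cyl p0 {..<n}"
    have "q \<in> Pi\<^sub>E UNIV U"
    proof (auto simp: PiE_def Pi_def extensional_def)
      fix i show "q i \<in> U i"
      proof (cases "U i = UNIV")
        case False
        then have "i < n" using n by blast
        then show ?thesis using q U(2) by (auto simp: cyl_def PiE_def)
      qed simp
    qed
    then show "q \<in> D" using U(3) by blast
  qed
  define cf where "cf = (\<lambda>x::bool\<times>bool. p0(n := fst x, Suc n := snd x, Suc (Suc n) := True))"
  define Q where "Q = (\<lambda>x. cyl (cf x) {..<Suc (Suc (Suc n))})"
  have Qcl: "clopen_C (Q x)" for x unfolding Q_def by (rule cyl_clopen) simp
  have QD: "Q x \<subseteq> D" for x
  proof -
    have "q \<in> cyl p0 {..<n}" if q: "q \<in> Q x" for q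
    proof -
      have h: "\<And>i. i < Suc (Suc (Suc n)) \<Longrightarrow> q i = cf x i" using q by (simp add: Q_def cyl_def)
      have "q i = p0 i" if "i < n" for i using h[of i] that by (simp add: cf_def)
      then show ?thesis by (simp add: cyl_def)
    qed
    then have "Q x \<subseteq> cyl p0 {..<n}" by blast
    then show ?thesis using cylD by blast
  qed
  have Qin: "cf x \<in> Q x" for x by (simp add: Q_def cyl_def)
  have Qc: "q \<in> Q x \<Longrightarrow> q n = fst x \<and> q (Suc n) = snd x \<and> q (Suc (Suc n))" for q x
  proof -
    assume "q \<in> Q x"
    then have h: "\<And>i. i < Suc (Suc (Suc n)) \<Longrightarrow> q i = cf x i" by (simp add: Q_def cyl_def)
    show ?thesis using h[of n] h[of "Suc n"] h[of "Suc (Suc n)"] by (simp add: cf_def)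
  qed
  have Qdisj: "Q x \<inter> Q y = {}" if "x \<noteq> y" for x y
  proof -
    have False if "q \<in> Q x" "q \<in> Q y" for q
      using Qc[OF that(1)] Qc[OF that(2)] \<open>x \<noteq> y\<close> by (cases x; cases y) simp
    then show ?thesis by blast
  qed
  define p where "p = p0(Suc (Suc n) := False)"
  have pD: "p \<in> D" using cylD by (auto simp: p_def cyl_def)
  have pQ: "p \<notin> Q x" for x using Qc[of p x] by (auto simp: p_def)
  have hg: "\<forall>g\<in>G. is_homeo g" "\<forall>g\<in>G. inv g \<in> G" using assms(1) homeo_group_def by auto
  have gen: "\<exists>g\<in>G. supp g \<subseteq> D \<and> g ` (D - Q (v, True)) \<subseteq> Q (v, False)" for v
  proof -
    have B: "clopen_C (D - Q (v, True))" using Dcl Qcl[of "(v,True)"]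
      by (simp add: clopen_C_def openin_diff closedin_diff)
    have Bne: "D - Q (v, True) \<noteq> {}" using Qin[of "(v,False)"] QD[of "(v,False)"]
        Qdisj[of "(v,False)" "(v,True)"] by blast
    have Bsub: "D - Q (v, True) \<subset> D" using Qin[of "(v,True)"] QD[of "(v,True)"] by blast
    have Cne: "Q (v, False) \<noteq> {}" using Qin by blast
    have Csub: "Q (v, False) \<subset> D" using Qin[of "(v,True)"] QD Qdisj[of "(v,False)" "(v,True)"] by blast
    have "clopen_C D \<and> clopen_C (D - Q (v, True)) \<and> clopen_C (Q (v, False)) \<and>
      D - Q (v, True) \<noteq> {} \<and> D - Q (v, True) \<subset> D \<and> Q (v, False) \<noteq> {} \<and> Q (v, False) \<subset> D"
      using B Bne Bsub Cne Csub Dcl Qcl by blast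
    then show ?thesis using assms(2) unfolding vigorous_def by (elim allE[of _ D] allE[of _ "D - Q (v, True)"] allE[of _ "Q (v, False)"]) (erule mp)
  qed
  have key: "\<And>x q. q \<in> D \<Longrightarrow> q \<notin> Q (fst x, \<not> snd x) \<Longrightarrow> g x q \<in> Q x"
    if gG: "\<And>v. g (v, False) \<in> G \<and> supp (g (v,False)) \<subseteq> D \<and> g (v,False) ` (D - Q (v, True)) \<subseteq> Q (v, False)"
      and gi: "\<And>v. g (v, True) = inv (g (v, False))"
    for g :: "bool \<times> bool \<Rightarrow> cpt_map"
  proof -
    fix x q assume q: "q \<in> D" "q \<notin> Q (fst x, \<not> snd x)"
    obtain v s where x: "x = (v, s)" by (cases x)
    show "g x q \<in> Q x"
    proof (cases s)
      case False
      then show ?thesis using gG[of v] q x by auto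
    next
      case True
      let ?h = "g (v, False)"
      have bh: "bij ?h" using gG[of v] hg bij_homeo by blast
      define r where "r = inv ?h q"
      have hr: "?h r = q" unfolding r_def using bh by (simp add: bij_is_surj surj_f_inv_f)
      have "r \<in> Q (v, True)"
      proof (rule ccontr)
        assume nr: "r \<notin> Q (v, True)"
        show False
        proof (cases "r \<in> D")
          case True
          then have "q \<in> Q (v, False)" using hr nr gG[of v] by blast
          then show False using q x \<open>s\<close> by simp
        next
          case False
          then have "r \<notin> supp ?h" using gG[of v] by blast
          then have "?h r = r" by (simp add: supp_def)
          then show False using hr False q by simp
        qed
      qed
      then show ?thesis using x True gi r_def by simp
    qed
  qed
  obtain a where a: "a \<in> G" "supp a \<subseteq> D" "a ` (D - Q (True, True)) \<subseteq> Q (True, False)"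
    using gen by blast
  obtain b where b: "b \<in> G" "supp b \<subseteq> D" "b ` (D - Q (False, True)) \<subseteq> Q (False, False)"
    using gen by blast
  have lv: "\<And>x q. q \<in> D \<Longrightarrow> q \<notin> Q (fst x, \<not> snd x) \<Longrightarrow> letter_val a b x q \<in> Q x"
  proof -
    have 1: "letter_val a b (v, False) \<in> G \<and> supp (letter_val a b (v, False)) \<subseteq> D \<and>
        letter_val a b (v, False) ` (D - Q (v, True)) \<subseteq> Q (v, False)" for v
      using a b by (cases v) (auto simp: letter_val_def)
    have 2: "letter_val a b (v, True) = inv (letter_val a b (v, False))" for v
      by (cases v) (auto simp: letter_val_def)
    show "\<And>x q. q \<in> D \<Longrightarrow> q \<notin> Q (fst x, \<not> snd x) \<Longrightarrow> letter_val a b x q \<in> Q x"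
      using key[of "letter_val a b", OF 1 2] by blast
  qed
  have fp: "free_pair a b"
    unfolding free_pair_def
  proof (intro allI impI)
    fix w :: "(bool \<times> bool) list" assume w: "reduced_word w \<and> w \<noteq> []"
    then obtain x w' where xw: "w = x # w'" by (cases w) auto
    have "word_val a b (x#w') p \<in> Q (last (x#w'))"
      by (rule pingpong[OF lv QD Qdisj]) (use w xw pD pQ in auto)
    then show "word_val a b w \<noteq> id" using pQ[of "last (x#w')"] xw by (metis id_apply)
  qed
  have "a \<in> pstab G A" "b \<in> pstab G A" using a b
    by (auto simp: pstab_def supp_def D_def)
  then show ?thesis using fp by blast
qed

end
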